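(* Let $N\ge 3$ be an integer, let $\Delta\theta^*=2\pi/N$, and let $P\neq 0$ be a real constant. Let $(\theta_k)_{k\ge1}$ and $(\omega_k)_{k\ge1}$ be real sequences with $\omega_k>0$ for all $k$, satisfying for every $k\ge 1$ $$\theta_{k+1}=\theta_k+\Delta\theta^*,\qquad \omega_{k+1}-\omega_k=P\sin\theta_k\left[\frac{1}{\omega_k}+\frac{1}{\omega_{k+1}}\right],$$ and the assumption $\omega_k^2>|P|$ for every $k\ge1$. If there exists an index $k_0$ with $\theta_{k_0} \bmod 2\pi\in\{0,\Delta\theta^*/2\}$, then the solution is periodic with period $N$: for every $k\ge k_0$ (indeed for every $k\ge1$), $\theta_{k+N}\equiv\theta_k \pmod{2\pi}$ and $\omega_{k+N}=\omega_k$.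
   Context: This is the "discrete zero dynamics" of a devil-stick with parameter $\phi=\pm\pi/2$; in the paper $P=\pm\frac{g(\Delta\theta^* )^2}{2R\sin(\Delta\theta^* )}$ (sign $+$ for $\phi=-\pi/2$, $-$ for $\phi=\pi/2$) with constants $g,R>0$. The hypothesis $\omega_k^2>|P|$ for all $k$ is the paper's Assumption 1. *)

theory Defs
  imports Complex_Main
begin

end

theory Submission
  imports Defs
begin

definition RR :: "real \<Rightarrow> real \<Rightarrow> real \<Rightarrow> bool" where
  "RR c x y \<longleftrightarrow> x + c / x = y - c / y"

lemma RR_flip: "RR c x y \<longleftrightarrow> RR (-c) y x"
  unfolding RR_def by auto

lemma RR_uniq:
  assumes "RR c x y" "RR c x y'" "y > 0" "y' > 0" "y\<^sup>2 > Q" "y'\<^sup>2 > Q" "\<bar>c\<bar> \<le> Q"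
  shows "y = y'"
proof (rule ccontr)
  assume ne: "y \<noteq> y'"
  have e: "y - c / y = y' - c / y'" using assms(1,2) unfolding RR_def by simp
  have "(y - y') * (y * y' + c) = 0"
    using e assms(3,4) by (simp add: field_simps)
  moreover have "y * y' > \<bar>c\<bar>"
  proof -
    have "(y*y')\<^sup>2 > Q\<^sup>2"
    proof -
      have "Q \<ge> 0" using assms(7) by linarith
      hence "Q * Q < y\<^sup>2 * y'\<^sup>2" using assms(5,6) by (simp add: mult_strict_mono')
      thus ?thesis by (simp add: power2_eq_square algebra_simps)
    qed
    hence "y*y' > Q" using assms(3,4) \<open>\<bar>c\<bar> \<le> Q\<close>
      by (metis abs_ge_zero abs_of_pos mult_pos_pos order_trans power2_less_imp_less)
    thus ?thesis using assms(7) by linarith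
  qed
  ultimately show False using ne by auto
qed

lemma RR_mono:
  assumes "RR c x y" "RR c x' y'" "x < x'" "x > 0" "y > 0" "y' > 0"
    "x\<^sup>2 > Q" "x'\<^sup>2 > Q" "y\<^sup>2 > Q" "y'\<^sup>2 > Q" "\<bar>c\<bar> \<le> Q"
  shows "y < y'"
proof (rule ccontr)
  assume "\<not> y < y'"
  hence le: "y' \<le> y" by simp
  have x'p: "x' > 0" using assms by linarith
  have Q0: "Q \<ge> 0" using assms(11) by linarith
  have xx: "x * x' > Q"
  proof -
    have "x * x > Q" using assms(7) by (simp add: power2_eq_square)
    moreover have "x * x < x * x'" using assms(3,4) by simp
    ultimately show ?thesis by linarith
  qed
  have yy: "y' * y \<ge> y' * y'" using le assms(6) by simp
  hence yy2: "y' * y > Q" using assms(10) by (simp add: power2_eq_square)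
  have "x' + c / x' - (x + c / x) = (x' - x) * (x * x' - c) / (x * x')"
    using assms(4) x'p by (simp add: field_simps)
  moreover have "(x' - x) * (x * x' - c) / (x * x') > 0"
    using xx assms(3,4,11) x'p by (intro divide_pos_pos mult_pos_pos) auto
  ultimately have h: "x' + c / x' > x + c / x" by linarith
  have "y - c / y - (y' - c / y') = (y - y') * (y * y' + c) / (y * y')"
    using assms(5,6) by (simp add: field_simps)
  moreover have "(y - y') * (y * y' + c) / (y * y') \<ge> 0"
    using yy2 le assms(5,6,11) by (intro divide_nonneg_pos mult_nonneg_nonneg) (auto simp: mult.commute)
  ultimately have "y - c / y \<ge> y' - c / y'" by linarith
  thus False using h assms(1,2) unfolding RR_def by linarith
qed

lemma compare:
  assumes sa: "\<And>j. RR (c j) (a j) (a (Suc j))" and sb: "\<And>j. RR (c j) (b j) (b (Suc j))"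
    and da: "\<And>j. a j > 0 \<and> (a j)\<^sup>2 > Q" and db: "\<And>j. b j > 0 \<and> (b j)\<^sup>2 > Q"
    and cb: "\<And>j. \<bar>c j\<bar> \<le> Q" and lt: "a 0 < b 0"
  shows "a j < b j"
proof (induction j)
  case 0 then show ?case using lt by simp
next
  case (Suc j)
  show ?case
    by (rule RR_mono[OF sa sb Suc]) (use da db cb in auto)
qed

lemma reversal:
  assumes sa: "\<And>j. RR (c j) (a j) (a (Suc j))" and sd: "\<And>j. RR (c j) (d j) (d (Suc j))"
    and da: "\<And>j. a j > 0 \<and> (a j)\<^sup>2 > Q" and dd: "\<And>j. d j > 0 \<and> (d j)\<^sup>2 > Q"
    and cb: "\<And>j. \<bar>c j\<bar> \<le> Q" and rv: "\<And>j. j < M \<Longrightarrow> c (M - 1 - j) = - c j"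
    and d0: "d 0 = a M"
  shows "j \<le> M \<Longrightarrow> d j = a (M - j)"
proof (induction j)
  case 0 then show ?case using d0 by simp
next
  case (Suc j)
  hence jM: "j < M" by simp
  have IH: "d j = a (M - j)" using Suc by simp
  have "RR (c (M - 1 - j)) (a (M - 1 - j)) (a (Suc (M - 1 - j)))" by (rule sa)
  moreover have "Suc (M - 1 - j) = M - j" using jM by simp
  ultimately have "RR (- c j) (a (M - Suc j)) (a (M - j))" using rv[OF jM] by simp
  hence "RR (c j) (a (M - j)) (a (M - Suc j))" using RR_flip by (metis minus_minus)
  hence r: "RR (c j) (d j) (a (M - Suc j))" using IH by simp
  show ?case by (rule RR_uniq[OF sd r]) (use da dd cb in auto)
qed

lemma period_core:
  assumes sa: "\<And>j. RR (c j) (a j) (a (Suc j))"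
    and da: "\<And>j. a j > 0 \<and> (a j)\<^sup>2 > Q"
    and cb: "\<And>j. \<bar>c j\<bar> \<le> Q" and per: "\<And>j. c (j + N) = c j"
    and rvcase: "(\<forall>j<N. c (N - 1 - j) = - c j) \<or> (c N = 0 \<and> (\<forall>j<N+1. c (N + 1 - 1 - j) = - c j))"
  shows "a N = a 0"
proof -
  define b where "b j = a (N + j)" for j
  have sb: "RR (c j) (b j) (b (Suc j))" for j
    using sa[of "N + j"] per[of j] unfolding b_def by (simp add: add.commute)
  have db: "b j > 0 \<and> (b j)\<^sup>2 > Q" for j unfolding b_def using da by simp
  have a2N: "a (2 * N) = a 0"
    using rvcase
  proof
    assume rv: "\<forall>j<N. c (N - 1 - j) = - c j"
    have "b N = a (N - N)"
      by (rule reversal[where c=c and a=a and d=b and Q=Q and M=N, OF sa sb da db cb]) (use rv in \<open>auto simp: b_def\<close>)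
    thus ?thesis by (simp add: b_def mult_2)
  next
    assume h: "c N = 0 \<and> (\<forall>j<N+1. c (N + 1 - 1 - j) = - c j)"
    have z: "RR 0 x y \<Longrightarrow> y = x" for x y unfolding RR_def by simp
    have e1: "a (N + 1) = a N" using sa[of N] h z by simp
    have e2: "a (2 * N + 1) = a (2 * N)" using sa[of "2*N"] per[of N] h z by (simp add: mult_2)
    have "b (N + 1) = a (N + 1 - (N + 1))"
      by (rule reversal[where c=c and a=a and d=b and Q=Q and M="N+1", OF sa sb da db cb]) (use h e1 in \<open>auto simp: b_def\<close>)
    thus ?thesis using e2 by (simp add: b_def mult_2)
  qed
  show ?thesis
  proof (rule ccontr)
    assume "a N \<noteq> a 0"
    hence "a 0 < a N \<or> a N < a 0" by linarith
    thus False
    proof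
      assume "a 0 < a N"
      hence "a N < b N" using compare[where c=c and a=a and b=b and Q=Q, OF sa sb da db cb] by (simp add: b_def)
      thus False using a2N \<open>a 0 < a N\<close> by (simp add: b_def mult_2)
    next
      assume "a N < a 0"
      hence "b N < a N" using compare[where c=c and a=b and b=a and Q=Q, OF sb sa db da cb] by (simp add: b_def)
      thus False using a2N \<open>a N < a 0\<close> by (simp add: b_def mult_2)
    qed
  qed
qed


lemma sin_shift_int: "sin (2 * pi * real_of_int m + x) = sin x"
  using sin_cos_eq_iff[of "2 * pi * real_of_int m + x" x] by (auto simp: algebra_simps)

theorem theorem1:
  fixes N :: nat and P :: real and \<theta> \<omega> :: "nat \<Rightarrow> real"
  assumes N3: "N \<ge> 3"
    and P0: "P \<noteq> 0"
    and pos: "\<And>k. k \<ge> 1 \<Longrightarrow> \<omega> k > 0"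
    and rec_theta: "\<And>k. k \<ge> 1 \<Longrightarrow> \<theta> (k + 1) = \<theta> k + 2 * pi / real N"
    and rec_omega: "\<And>k. k \<ge> 1 \<Longrightarrow>
           \<omega> (k + 1) - \<omega> k = P * sin (\<theta> k) * (1 / \<omega> k + 1 / \<omega> (k + 1))"
    and assm1: "\<And>k. k \<ge> 1 \<Longrightarrow> (\<omega> k)\<^sup>2 > \<bar>P\<bar>"
    and k0: "k0 \<ge> 1"
    and sym: "\<exists>m::int. \<theta> k0 = 2 * pi * real_of_int m
                     \<or> \<theta> k0 = 2 * pi * real_of_int m + (2 * pi / real N) / 2"
  shows "\<forall>k\<ge>1. (\<exists>m::int. \<theta> (k + N) = \<theta> k + 2 * pi * real_of_int m)
                 \<and> \<omega> (k + N) = \<omega> k"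
proof -
  define D where "D = 2 * pi / real N"
  have Npos: "real N > 0" using N3 by simp
  have ND: "real N * D = 2 * pi" unfolding D_def using Npos by simp
  have th: "\<theta> (k + j) = \<theta> k + real j * D" if "k \<ge> 1" for k j
  proof (induction j)
    case 0 then show ?case by simp
  next
    case (Suc j)
    have "\<theta> (k + Suc j) = \<theta> (k + j + 1)" by simp
    also have "\<dots> = \<theta> (k + j) + D" using rec_theta[of "k + j"] that unfolding D_def by simp
    finally show ?case using Suc by (simp add: algebra_simps)
  qed
  have thN: "\<theta> (k + N) = \<theta> k + 2 * pi" if "k \<ge> 1" for k
    using th[OF that, of N] ND by simp
  have sinN: "sin (\<theta> (k + N)) = sin (\<theta> k)" if "k \<ge> 1" for k
    using thN[OF that] by simp
  have RRk: "RR (P * sin (\<theta> k)) (\<omega> k) (\<omega> (Suc k))" if "k \<ge> 1" for k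
  proof -
    have p1: "\<omega> k > 0" and p2: "\<omega> (Suc k) > 0" using pos that by auto
    have "\<omega> (Suc k) - \<omega> k = P * sin (\<theta> k) / \<omega> k + P * sin (\<theta> k) / \<omega> (Suc k)"
      using rec_omega[OF that] by (simp add: algebra_simps)
    thus ?thesis unfolding RR_def by linarith
  qed
  have cbound: "\<bar>P * sin x\<bar> \<le> \<bar>P\<bar>" for x
    by (simp add: abs_mult mult_left_le)
  define a where "a j = \<omega> (k0 + j)" for j
  define c where "c j = P * sin (\<theta> (k0 + j))" for j
  have sa: "RR (c j) (a j) (a (Suc j))" for j
    using RRk[of "k0 + j"] k0 unfolding a_def c_def by simp
  have da: "a j > 0 \<and> (a j)\<^sup>2 > \<bar>P\<bar>" for j
    unfolding a_def using pos assm1 k0 by simp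
  have cb: "\<bar>c j\<bar> \<le> \<bar>P\<bar>" for j unfolding c_def by (rule cbound)
  have per: "c (j + N) = c j" for j
    using sinN[of "k0 + j"] k0 unfolding c_def by (simp add: add.assoc)
  obtain m :: int and t0 where t0: "t0 = 0 \<or> t0 = D / 2" and tk0: "\<theta> k0 = 2 * pi * real_of_int m + t0"
  proof -
    from sym obtain m :: int where "\<theta> k0 = 2 * pi * real_of_int m
                     \<or> \<theta> k0 = 2 * pi * real_of_int m + (2 * pi / real N) / 2" by blast
    thus ?thesis using that[of 0 m] that[of "D / 2" m] unfolding D_def by auto
  qed
  have cj: "c j = P * sin (t0 + real j * D)" for j
  proof -
    have "\<theta> (k0 + j) = 2 * pi * real_of_int m + (t0 + real j * D)"
      using th[OF k0, of j] tk0 by simp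
    thus ?thesis unfolding c_def using sin_shift_int by simp
  qed
  have rvcase: "(\<forall>j<N. c (N - 1 - j) = - c j) \<or> (c N = 0 \<and> (\<forall>j<N+1. c (N + 1 - 1 - j) = - c j))"
    using t0
  proof
    assume t: "t0 = 0"
    have "c N = 0" unfolding cj t using ND by simp
    moreover have "c (N + 1 - 1 - j) = - c j" if "j < N + 1" for j
    proof -
      have "real (N + 1 - 1 - j) = real N - real j" using that by simp
      hence "t0 + real (N + 1 - 1 - j) * D = 2 * pi - (t0 + real j * D)"
        using t ND by (simp add: algebra_simps)
      hence "sin (t0 + real (N + 1 - 1 - j) * D) = - sin (t0 + real j * D)"
        by (subst \<open>t0 + real (N + 1 - 1 - j) * D = _\<close>) (rule sin_2pi_minus)
      thus ?thesis unfolding cj by simp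
    qed
    ultimately show ?thesis by blast
  next
    assume t: "t0 = D / 2"
    have "c (N - 1 - j) = - c j" if "j < N" for j
    proof -
      have "real (N - 1 - j) = real N - 1 - real j" using that by simp
      hence "t0 + real (N - 1 - j) * D = 2 * pi - (t0 + real j * D)"
        using t ND by (simp add: algebra_simps)
      hence "sin (t0 + real (N - 1 - j) * D) = - sin (t0 + real j * D)"
        by (subst \<open>t0 + real (N - 1 - j) * D = _\<close>) (rule sin_2pi_minus)
      thus ?thesis unfolding cj by simp
    qed
    thus ?thesis by blast
  qed
  have aN: "a N = a 0" by (rule period_core[OF sa da cb per rvcase])
  hence base: "\<omega> (k0 + N) = \<omega> k0" unfolding a_def by simp
  have step_eq: "\<omega> (k + 1 + N) = \<omega> (k + 1) \<longleftrightarrow> \<omega> (k + N) = \<omega> k" if "k \<ge> 1" for k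
  proof -
    have r1: "RR (P * sin (\<theta> k)) (\<omega> k) (\<omega> (Suc k))" by (rule RRk[OF that])
    have r2: "RR (P * sin (\<theta> k)) (\<omega> (k + N)) (\<omega> (Suc (k + N)))"
      using RRk[of "k + N"] that sinN[OF that] by simp
    show ?thesis
    proof
      assume e: "\<omega> (k + 1 + N) = \<omega> (k + 1)"
      have f1: "RR (- (P * sin (\<theta> k))) (\<omega> (Suc k)) (\<omega> k)" using r1 RR_flip by blast
      have f2: "RR (- (P * sin (\<theta> k))) (\<omega> (Suc k)) (\<omega> (k + N))"
        using r2 RR_flip e by simp
      show "\<omega> (k + N) = \<omega> k"
        by (rule RR_uniq[OF f2 f1, where Q="\<bar>P\<bar>"]) (use pos assm1 that in \<open>auto simp: cbound\<close>)
    next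
      assume e: "\<omega> (k + N) = \<omega> k"
      have "RR (P * sin (\<theta> k)) (\<omega> k) (\<omega> (Suc (k + N)))" using r2 e by simp
      from RR_uniq[OF this r1, where Q="\<bar>P\<bar>"] show "\<omega> (k + 1 + N) = \<omega> (k + 1)"
        using pos assm1 that cbound by simp
    qed
  qed
  have up: "\<omega> (k0 + i + N) = \<omega> (k0 + i)" for i
  proof (induction i)
    case 0 then show ?case using base by simp
  next
    case (Suc i)
    then show ?case using step_eq[of "k0 + i"] k0 by simp
  qed
  have down: "\<omega> (k0 - i + N) = \<omega> (k0 - i)" if "i < k0" for i
    using that
  proof (induction i)
    case 0 then show ?case using base by simp
  next
    case (Suc i)
    have "k0 - Suc i \<ge> 1" using Suc.prems by simp
    moreover have "k0 - Suc i + 1 = k0 - i" using Suc.prems by simp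
    ultimately show ?case using step_eq[of "k0 - Suc i"] Suc by simp
  qed
  show ?thesis
  proof (intro allI impI conjI)
    fix k :: nat assume k: "k \<ge> 1"
    show "\<exists>m::int. \<theta> (k + N) = \<theta> k + 2 * pi * real_of_int m"
      by (rule exI[of _ 1]) (simp add: thN[OF k])
    show "\<omega> (k + N) = \<omega> k"
    proof (cases "k \<ge> k0")
      case True
      then show ?thesis using up[of "k - k0"] by simp
    next
      case False
      then show ?thesis using down[of "k0 - k"] k by simp
    qed
  qed
qed

end
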